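(* Let $X_1,X_2,\dots$ be i.i.d. exponential random variables with mean $1$ and $\lambda_1,\lambda_2,\dots$ positive reals. Then for any $t\ge0$ and integers $k>m\ge0$, $$\mathbb{P}\Big(\sum_{i=1}^kX_i/\lambda_i\le t,\ \sum_{i=1}^mX_i/\lambda_i+\sum_{i=k+1}^{2k-m}X_i/\lambda_i\le t\Big)\le\frac{(et)^{2k-m}}{(k-m)^{2k-2m}m^m}\prod_{i=1}^{2k-m}\lambda_i.$$
   Context: The convention $0^0=1$ is used when $m=0$. *)

theory Defs
  imports "HOL-Probability.Probability"
begin

end

theory Submission
  imports Defs
begin

lemma (in prob_space) exp_mgf_exponential:
  assumes D: "distributed M lborel Y (exponential_density 1)" and a: "0 \<le> a"
  shows "has_bochner_integral M (\<lambda>x. exp (- a * Y x)) (1 / (1 + a))"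
proof (rule has_bochner_integral_nn_integral)
  have [measurable]: "Y \<in> borel_measurable M" using distributed_measurable[OF D] by simp
  show "(\<lambda>x. exp (- a * Y x)) \<in> borel_measurable M" by measurable
  show "AE x in M. 0 \<le> exp (- a * Y x)" by simp
  show "0 \<le> 1 / (1 + a)" using a by simp
  have "(\<integral>\<^sup>+ x. ennreal (exp (- a * Y x)) \<partial>M) = (\<integral>\<^sup>+x. ennreal (exponential_density 1 x) * ennreal (exp (- a * x)) \<partial>lborel)"
    by (subst distributed_nn_integral[symmetric, OF D]) auto
  also have "\<dots> = (\<integral>\<^sup>+x. ennreal (1/(1+a)) * ennreal (erlang_density 0 (1+a) x) \<partial>lborel)"
    using a by (intro nn_integral_cong) (auto simp: exponential_density_def ennreal_mult'[symmetric] exp_add[symmetric] algebra_simps add_pos_nonneg divide_simps)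
  also have "\<dots> = ennreal (1/(1+a)) * (\<integral>\<^sup>+x. ennreal (erlang_density 0 (1+a) x) \<partial>lborel)"
    by (intro nn_integral_cmult) auto
  also have "(\<integral>\<^sup>+x. ennreal (erlang_density 0 (1+a) x) \<partial>lborel) = 1"
    using nn_integral_erlang_ith_moment[of "1+a" 0 0] a by simp
  finally show "(\<integral>\<^sup>+ x. ennreal (exp (- a * Y x)) \<partial>M) = ennreal (1 / (1 + a))" by simp
qed

lemma sum_split3:
  fixes f :: "nat \<Rightarrow> real"
  assumes "a \<le> b" "b \<le> c"
  shows "(\<Sum>i=a+1..c. f i) = (\<Sum>i=a+1..b. f i) + (\<Sum>i=b+1..c. f i)"
proof -
  have "{a+1..c} = {a+1..b} \<union> {b+1..c}" using assms by auto
  then show ?thesis by (simp add: sum.union_disjoint ivl_disj_int)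
qed

lemma final_arith:
  fixes P L t :: real and k m n :: nat
  assumes key: "\<And>\<theta>. \<theta> > 0 \<Longrightarrow> P \<le> exp (2*\<theta>*t) * L / (2^m * \<theta>^n)"
    and L: "L > 0" and t: "t \<ge> 0" and km: "k > m" and n: "n = 2*k-m"
  shows "P \<le> (exp 1 * t) ^ n / (real (k-m) ^ (2*k-2*m) * real m ^ m) * L"
proof (cases "t = 0")
  case True
  have n1: "n \<ge> 1" using km n by simp
  have "P \<le> 0"
  proof (rule ccontr)
    assume "\<not> P \<le> 0"
    hence P0: "P > 0" by simp
    define th where "th = max 1 (2 * L / (2^m * P))"
    have th1: "th \<ge> 1" unfolding th_def by simp
    have "th ^ 1 \<le> th ^ n" using th1 n1 by (intro power_increasing) auto
    hence thn: "th \<le> th ^ n" by simp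
    have "P \<le> L / (2^m * th^n)" using key[of th] th1 True by simp
    also have "\<dots> \<le> L / (2^m * th)"
      using th1 thn L by (intro divide_left_mono mult_left_mono) auto
    also have "\<dots> \<le> P / 2"
    proof -
      have "2 * L / (2^m * P) \<le> th" unfolding th_def by simp
      hence "2 * L \<le> th * (2^m * P)" using P0 by (simp add: divide_le_eq mult.commute)
      thus ?thesis using th1 P0 by (simp add: divide_le_eq field_simps)
    qed
    finally show False using P0 by simp
  qed
  moreover have "(exp 1 * t) ^ n / (real (k-m) ^ (2*k-2*m) * real m ^ m) * L = 0" using True n1 by (simp add: zero_power)
  ultimately show ?thesis by linarith
next
  case False
  hence tp: "t > 0" using t by simp
  define j where "j = k - m"
  have nj: "n = m + 2*j" and j2: "2*k-2*m = 2*j" and j1: "j \<ge> 1" using n km unfolding j_def by auto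
  have np: "real n > 0" using nj j1 by simp
  define th where "th = real n / (2*t)"
  have thp: "th > 0" unfolding th_def using np tp by simp
  have "P \<le> exp (2*th*t) * L / (2^m * th^n)" by (rule key[OF thp])
  also have "exp (2*th*t) = exp 1 ^ n" unfolding th_def using tp by (simp add: exp_of_nat_mult[symmetric])
  also have "th ^ n = real n ^ n / (2^n * t^n)" unfolding th_def by (simp add: power_divide power_mult_distrib)
  also have "exp 1 ^ n * L / (2 ^ m * (real n ^ n / (2 ^ n * t ^ n))) = (exp 1 * t)^n * L * (2^(2*j) / real n ^ n)"
    using np tp by (simp add: nj power_add power_mult_distrib field_simps)
  also have "\<dots> \<le> (exp 1 * t)^n * L * (1 / (real j ^ (2*j) * real m ^ m))"
  proof (intro mult_left_mono)
    have a: "(2 * real j) ^ (2*j) \<le> real n ^ (2*j)" using nj by (intro power_mono) auto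
    have b: "real m ^ m \<le> real n ^ m" using nj by (intro power_mono) auto
    have "(2 * real j) ^ (2*j) * real m ^ m \<le> real n ^ (2*j) * real n ^ m"
      using a b by (intro mult_mono) auto
    hence c: "2^(2*j) * (real j ^ (2*j) * real m ^ m) \<le> real n ^ n"
      by (simp add: nj power_add power_mult_distrib mult_ac)
    have pos: "real j ^ (2*j) * real m ^ m > 0"
      using j1 by (cases "m = 0") auto
    show "2^(2*j) / real n ^ n \<le> 1 / (real j ^ (2*j) * real m ^ m)"
      using c pos np by (simp add: divide_le_eq le_divide_eq field_simps)
  qed (use L tp in auto)
  finally show ?thesis by (simp add: j_def[symmetric] j2)
qed

lemma (in prob_space) key_bound:
  fixes X :: "nat \<Rightarrow> 'a \<Rightarrow> real" and lam :: "nat \<Rightarrow> real"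
  assumes indep: "indep_vars (\<lambda>_. borel) X {1..}"
    and D: "\<And>i. i \<ge> 1 \<Longrightarrow> distributed M lborel (X i) (exponential_density 1)"
    and lam: "\<And>i. i \<ge> 1 \<Longrightarrow> lam i > 0"
    and km: "k > m" and n: "n = 2*k-m" and th: "\<theta> > 0"
  shows "prob {\<omega> \<in> space M.
            (\<Sum>i=1..k. X i \<omega> / lam i) \<le> t \<and>
            (\<Sum>i=1..m. X i \<omega> / lam i) + (\<Sum>i=k+1..n. X i \<omega> / lam i) \<le> t}
         \<le> exp (2*\<theta>*t) * (\<Prod>i=1..n. lam i) / (2^m * \<theta>^n)"
proof -
  have Xm: "\<And>i. i \<ge> 1 \<Longrightarrow> X i \<in> borel_measurable M"
    using D distributed_measurable by (metis measurable_lborel1)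
  define S1 where "S1 \<omega> = (\<Sum>i=1..k. X i \<omega> / lam i)" for \<omega>
  define S2 where "S2 \<omega> = (\<Sum>i=1..m. X i \<omega> / lam i) + (\<Sum>i=k+1..n. X i \<omega> / lam i)" for \<omega>
  have [measurable]: "S1 \<in> borel_measurable M" unfolding S1_def
    by (intro borel_measurable_sum borel_measurable_divide Xm) auto
  have [measurable]: "S2 \<in> borel_measurable M" unfolding S2_def
    by (intro borel_measurable_add borel_measurable_sum borel_measurable_divide Xm) auto
  define E where "E = {\<omega> \<in> space M. S1 \<omega> \<le> t \<and> S2 \<omega> \<le> t}"
  have Esets: "E \<in> sets M" unfolding E_def by measurable
  define c where "c i = (if i \<le> m then 2*\<theta> else \<theta>) / lam i" for i
  have c0: "c i \<ge> 0" if "i \<in> {1..n}" for i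
  proof -
    have "lam i > 0" using lam that by auto
    then show ?thesis unfolding c_def using th by simp
  qed
  define Z where "Z i \<omega> = exp (- c i * X i \<omega>)" for i \<omega>
  define g where "g \<omega> = exp (2*\<theta>*t) * (\<Prod>i\<in>{1..n}. Z i \<omega>)" for \<omega>
  have indZ: "indep_vars (\<lambda>_. borel) Z {1..n}"
  proof -
    have "indep_vars (\<lambda>_. borel) X {1..n}" using indep by (rule indep_vars_subset) auto
    then have "indep_vars (\<lambda>_. borel) (\<lambda>i x. (\<lambda>y. exp (- c i * y)) (X i x)) {1..n}"
      by (rule indep_vars_compose2) auto
    then show ?thesis unfolding Z_def by simp
  qed
  have hbZ: "\<And>i. i \<in> {1..n} \<Longrightarrow> has_bochner_integral M (Z i) (1 / (1 + c i))"
    unfolding Z_def using D c0 by (intro exp_mgf_exponential) auto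
  have intZ: "\<And>i. i \<in> {1..n} \<Longrightarrow> integrable M (Z i)" using hbZ integrable.intros by blast
  have EZ: "\<And>i. i \<in> {1..n} \<Longrightarrow> integral\<^sup>L M (Z i) = 1 / (1 + c i)"
    using hbZ by (simp add: has_bochner_integral_integral_eq)
  have intg: "integrable M g" unfolding g_def
    by (intro integrable_mult_right indep_vars_integrable indZ intZ) auto
  have Eg: "integral\<^sup>L M g = exp (2*\<theta>*t) * (\<Prod>i\<in>{1..n}. 1 / (1 + c i))"
    unfolding g_def using indep_vars_lebesgue_integral[OF _ indZ intZ] EZ by simp
  have pw: "indicator E \<omega> \<le> g \<omega>" if "\<omega> \<in> space M" for \<omega>
  proof (cases "\<omega> \<in> E")
    case False
    then show ?thesis unfolding g_def Z_def by (simp add: prod_nonneg)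
  next
    case True
    let ?Y = "\<lambda>i. X i \<omega> / lam i"
    have mk: "m \<le> k" "k \<le> n" using km n by auto
    have "(\<Prod>i\<in>{1..n}. Z i \<omega>) = exp (\<Sum>i\<in>{1..n}. - c i * X i \<omega>)"
      unfolding Z_def by (simp add: exp_sum)
    also have "(\<Sum>i\<in>{1..n}. - c i * X i \<omega>) = - (\<Sum>i=0+1..n. (if i \<le> m then 2*\<theta> else \<theta>) * ?Y i)"
      unfolding c_def by (simp add: sum_negf[symmetric])
    also have "(\<Sum>i=0+1..n. (if i \<le> m then 2*\<theta> else \<theta>) * ?Y i)
       = (\<Sum>i=0+1..m. (if i \<le> m then 2*\<theta> else \<theta>) * ?Y i) + (\<Sum>i=m+1..k. (if i \<le> m then 2*\<theta> else \<theta>) * ?Y i)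
         + (\<Sum>i=k+1..n. (if i \<le> m then 2*\<theta> else \<theta>) * ?Y i)"
      using mk sum_split3[of 0 m n "\<lambda>i. (if i \<le> m then 2*\<theta> else \<theta>) * ?Y i"]
        sum_split3[of m k n "\<lambda>i. (if i \<le> m then 2*\<theta> else \<theta>) * ?Y i"] by linarith
    also have "\<dots> = 2*\<theta> * (\<Sum>i=1..m. ?Y i) + \<theta> * (\<Sum>i=m+1..k. ?Y i) + \<theta> * (\<Sum>i=k+1..n. ?Y i)"
      using mk by (simp add: sum_distrib_left)
    also have "\<dots> = \<theta> * (S1 \<omega> + S2 \<omega>)"
      unfolding S1_def S2_def using mk sum_split3[of 0 m k ?Y] by (simp add: algebra_simps)
    finally have "g \<omega> = exp (2*\<theta>*t) * exp (- (\<theta> * (S1 \<omega> + S2 \<omega>)))"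
      unfolding g_def by simp
    also have "\<dots> = exp (2*\<theta>*t - \<theta> * (S1 \<omega> + S2 \<omega>))"
      by (simp add: exp_add[symmetric])
    moreover have "2*\<theta>*t - \<theta> * (S1 \<omega> + S2 \<omega>) \<ge> 0"
    proof -
      have "S1 \<omega> + S2 \<omega> \<le> 2*t" using True unfolding E_def by simp
      then have "\<theta> * (S1 \<omega> + S2 \<omega>) \<le> \<theta> * (2*t)" using th by (intro mult_left_mono) auto
      then show ?thesis by simp
    qed
    ultimately show ?thesis using True by simp
  qed
  have "prob E = integral\<^sup>L M (indicator E)" using Esets by simp
  also have "\<dots> \<le> integral\<^sup>L M g"
    by (intro integral_mono intg pw) (use Esets in \<open>auto intro!: integrable_real_indicator simp: emeasure_eq_measure\<close>)
  also have "\<dots> \<le> exp (2*\<theta>*t) * (\<Prod>i\<in>{1..n}. lam i * (if i \<le> m then 1/(2*\<theta>) else 1/\<theta>))"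
    unfolding Eg
  proof (intro mult_left_mono prod_mono conjI)
    fix i assume i: "i \<in> {1..n}"
    have l: "lam i > 0" using lam i by auto
    show "0 \<le> 1 / (1 + c i)" using c0[OF i] by simp
    show "1 / (1 + c i) \<le> lam i * (if i \<le> m then 1/(2*\<theta>) else 1/\<theta>)"
      using l th unfolding c_def by (auto simp: field_simps)
  qed simp
  also have "(\<Prod>i\<in>{1..n}. lam i * (if i \<le> m then 1/(2*\<theta>) else 1/\<theta>))
     = (\<Prod>i=1..n. lam i) * ((1/(2*\<theta>))^m * (1/\<theta>)^(n-m))"
  proof -
    have "(\<Prod>i\<in>{1..n}. (if i \<le> m then 1/(2*\<theta>) else 1/\<theta>)) = (1/(2*\<theta>))^card ({1..n} \<inter> {i. i \<le> m}) * (1/\<theta>)^card ({1..n} \<inter> - {i. i \<le> m})"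
      by (simp add: prod.If_cases)
    also have "{1..n} \<inter> {i. i \<le> m} = {1..m}" using km n by auto
    also have "{1..n} \<inter> - {i. i \<le> m} = {m+1..n}" using km n by auto
    finally show ?thesis by (simp add: prod.distrib)
  qed
  also have "exp (2*\<theta>*t) * ((\<Prod>i=1..n. lam i) * ((1/(2*\<theta>))^m * (1/\<theta>)^(n-m)))
      = exp (2*\<theta>*t) * (\<Prod>i=1..n. lam i) / (2^m * \<theta>^n)"
  proof -
    have "\<theta>^n = \<theta>^m * \<theta>^(n-m)" using km n by (simp add: power_add[symmetric])
    then show ?thesis using th by (simp add: power_divide power_mult_distrib field_simps)
  qed
  finally show ?thesis unfolding E_def S1_def S2_def .
qed

theorem lemma2p2:
  fixes M :: "'a measure" and X :: "nat \<Rightarrow> 'a \<Rightarrow> real" and lam :: "nat \<Rightarrow> real"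
    and t :: real and k m :: nat
  assumes "prob_space M"
    and "prob_space.indep_vars M (\<lambda>_. borel) X {1..}"
    and "\<And>i. i \<ge> 1 \<Longrightarrow> distributed M lborel (X i) (exponential_density 1)"
    and "\<And>i. i \<ge> 1 \<Longrightarrow> lam i > 0"
    and "t \<ge> 0"
    and "k > m"
  shows "measure M {\<omega> \<in> space M.
            (\<Sum>i=1..k. X i \<omega> / lam i) \<le> t \<and>
            (\<Sum>i=1..m. X i \<omega> / lam i) + (\<Sum>i=k+1..2*k-m. X i \<omega> / lam i) \<le> t}
         \<le> (exp 1 * t) ^ (2*k-m) / (real (k-m) ^ (2*k-2*m) * real m ^ m)
             * (\<Prod>i=1..2*k-m. lam i)"
proof -
  interpret prob_space M by (rule assms(1))
  have L: "(\<Prod>i=1..2*k-m. lam i) > 0" using assms(4) by (intro prod_pos) auto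
  show ?thesis
    by (rule final_arith[OF key_bound[OF assms(2) assms(3) assms(4) assms(6) refl] L assms(5) assms(6) refl])
qed

end
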